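(* For $n\ge2$ and $c\ge1$, the abelianization of $UW_n(c)$ is isomorphic to $\mathbb{Z}^c\oplus\mathbb{Z}_2$.
   Context: $UV_n(c)$ ($n\ge2$, $c\ge1$) is the group with generators $\rho_i$ ($1\le i\le n-1$), $\sigma_{i,t}$ ($1\le i\le n-1$, $1\le t\le c$) and relations $\rho_i\rho_{i+1}\rho_i=\rho_{i+1}\rho_i\rho_{i+1}$ ($1\le i\le n-2$), $\rho_i\rho_j=\rho_j\rho_i$ ($|i-j|\ge2$), $\rho_i^2=1$, $\sigma_{i,t}\sigma_{j,\ell}=\sigma_{j,\ell}\sigma_{i,t}$ ($|i-j|\ge2$, $1\le t,\ell\le c$), $\sigma_{i,t}\rho_j=\rho_j\sigma_{i,t}$ ($|i-j|\ge2$), $\rho_i\rho_{i+1}\sigma_{i,t}=\sigma_{i+1,t}\rho_i\rho_{i+1}$ ($1\le i\le n-2$, $1\le t\le c$). The universal welded braid group $UW_n(c)$ is the quotient of $UV_n(c)$ by the additional (welded) relations $\rho_i\sigma_{i+1,t}\sigma_{i,t}=\sigma_{i+1,t}\sigma_{i,t}\rho_{i+1}$ for all $1\le i\le n-2$, $1\le t\le c$. *)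

theory Defs
  imports "HOL-Algebra.Algebra"
begin

text \<open>A letter (g, False) stands for the generator g, (g, True) for its inverse.
  Words are lists of letters.\<close>

type_synonym 'g word = "('g \<times> bool) list"

definition valid_word :: "'g set \<Rightarrow> 'g word \<Rightarrow> bool" where
  "valid_word S w \<longleftrightarrow> fst ` set w \<subseteq> S"

inductive pres_eq :: "'g set \<Rightarrow> ('g word \<times> 'g word) set \<Rightarrow> 'g word \<Rightarrow> 'g word \<Rightarrow> bool"
  for S R where
  refl: "valid_word S w \<Longrightarrow> pres_eq S R w w"
| sym: "pres_eq S R w w' \<Longrightarrow> pres_eq S R w' w"
| trans: "pres_eq S R w w' \<Longrightarrow> pres_eq S R w' w'' \<Longrightarrow> pres_eq S R w w''"
| cancel: "valid_word S u \<Longrightarrow> valid_word S v \<Longrightarrow> g \<in> S \<Longrightarrow>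
           pres_eq S R (u @ [(g, b), (g, \<not> b)] @ v) (u @ v)"
| rel: "(l, r) \<in> R \<Longrightarrow> valid_word S l \<Longrightarrow> valid_word S r \<Longrightarrow>
        valid_word S u \<Longrightarrow> valid_word S v \<Longrightarrow>
        pres_eq S R (u @ l @ v) (u @ r @ v)"

definition presented_group :: "'g set \<Rightarrow> ('g word \<times> 'g word) set \<Rightarrow> ('g word set) monoid" where
  "presented_group S R =
     \<lparr> carrier = {{w'. pres_eq S R w w'} | w. valid_word S w},
       monoid.mult = (\<lambda>A B. {w. \<exists>a\<in>A. \<exists>b\<in>B. pres_eq S R (a @ b) w}),
       one = {w. pres_eq S R [] w} \<rparr>"

datatype uw_gen = Rho nat | Sigma nat nat

definition uw_gens :: "nat \<Rightarrow> nat \<Rightarrow> uw_gen set" where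
  "uw_gens n c = {Rho i | i. 1 \<le> i \<and> i \<le> n - 1}
               \<union> {Sigma i t | i t. 1 \<le> i \<and> i \<le> n - 1 \<and> 1 \<le> t \<and> t \<le> c}"

definition rh :: "nat \<Rightarrow> (uw_gen \<times> bool)" where "rh i = (Rho i, False)"
definition sg :: "nat \<Rightarrow> nat \<Rightarrow> (uw_gen \<times> bool)" where "sg i t = (Sigma i t, False)"

definition uv_rels :: "nat \<Rightarrow> nat \<Rightarrow> (uw_gen word \<times> uw_gen word) set" where
  "uv_rels n c =
     {([rh i, rh (i+1), rh i], [rh (i+1), rh i, rh (i+1)]) | i. 1 \<le> i \<and> i \<le> n - 2}
   \<union> {([rh i, rh j], [rh j, rh i]) | i j. 1 \<le> i \<and> i \<le> n - 1 \<and> 1 \<le> j \<and> j \<le> n - 1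
                                    \<and> (i + 2 \<le> j \<or> j + 2 \<le> i)}
   \<union> {([rh i, rh i], []) | i. 1 \<le> i \<and> i \<le> n - 1}
   \<union> {([sg i t, sg j l], [sg j l, sg i t]) | i j t l. 1 \<le> i \<and> i \<le> n - 1 \<and> 1 \<le> j \<and> j \<le> n - 1
          \<and> (i + 2 \<le> j \<or> j + 2 \<le> i) \<and> 1 \<le> t \<and> t \<le> c \<and> 1 \<le> l \<and> l \<le> c}
   \<union> {([sg i t, rh j], [rh j, sg i t]) | i j t. 1 \<le> i \<and> i \<le> n - 1 \<and> 1 \<le> j \<and> j \<le> n - 1
          \<and> (i + 2 \<le> j \<or> j + 2 \<le> i) \<and> 1 \<le> t \<and> t \<le> c}
   \<union> {([rh i, rh (i+1), sg i t], [sg (i+1) t, rh i, rh (i+1)]) | i t.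
          1 \<le> i \<and> i \<le> n - 2 \<and> 1 \<le> t \<and> t \<le> c}"

definition welded_rels :: "nat \<Rightarrow> nat \<Rightarrow> (uw_gen word \<times> uw_gen word) set" where
  "welded_rels n c =
     {([rh i, sg (i+1) t, sg i t], [sg (i+1) t, sg i t, rh (i+1)]) | i t.
          1 \<le> i \<and> i \<le> n - 2 \<and> 1 \<le> t \<and> t \<le> c}"

definition UW :: "nat \<Rightarrow> nat \<Rightarrow> (uw_gen word set) monoid" where
  "UW n c = presented_group (uw_gens n c) (uv_rels n c \<union> welded_rels n c)"

definition abelianization :: "('a, 'b) monoid_scheme \<Rightarrow> 'a set monoid" where
  "abelianization G = G Mod (derived G (carrier G))"

end

theory Submission
  imports Defs
begin


abbreviation cls where "cls S R w \<equiv> {w'. pres_eq S R w w'}"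

lemma valid_append[simp]: "valid_word S (a @ b) \<longleftrightarrow> valid_word S a \<and> valid_word S b"
  by (auto simp: valid_word_def)
lemma valid_Cons[simp]: "valid_word S (x # b) \<longleftrightarrow> fst x \<in> S \<and> valid_word S b"
  by (auto simp: valid_word_def)
lemma valid_Nil[simp]: "valid_word S []"
  by (auto simp: valid_word_def)

lemma pres_eq_valid: "pres_eq S R w w' \<Longrightarrow> valid_word S w \<and> valid_word S w'"
  by (induction rule: pres_eq.induct) auto

lemma pres_eq_append_right: "pres_eq S R w w' \<Longrightarrow> valid_word S v \<Longrightarrow> pres_eq S R (w @ v) (w' @ v)"
proof (induction rule: pres_eq.induct)
  case (refl w) then show ?case by (auto intro: pres_eq.refl)
next
  case (sym w w') then show ?case by (auto intro: pres_eq.sym)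
next
  case (trans w w' w'') then show ?case by (auto intro: pres_eq.trans)
next
  case (cancel u v' g b) then show ?case using pres_eq.cancel[of S "u" "v' @ v" g R b] by auto
next
  case (rel l r u v') then show ?case using pres_eq.rel[of l r R S u "v' @ v"] by auto
qed

lemma pres_eq_append_left: "pres_eq S R w w' \<Longrightarrow> valid_word S v \<Longrightarrow> pres_eq S R (v @ w) (v @ w')"
proof (induction rule: pres_eq.induct)
  case (refl w) then show ?case by (auto intro: pres_eq.refl)
next
  case (sym w w') then show ?case by (auto intro: pres_eq.sym)
next
  case (trans w w' w'') then show ?case by (auto intro: pres_eq.trans)
next
  case (cancel u v' g b) then show ?case using pres_eq.cancel[of S "v @ u" "v'" g R b] by auto
next
  case (rel l r u v') then show ?case using pres_eq.rel[of l r R S "v @ u" "v'"] by auto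
qed

lemma pres_eq_cong: "pres_eq S R a a' \<Longrightarrow> pres_eq S R b b' \<Longrightarrow> pres_eq S R (a @ b) (a' @ b')"
  by (meson pres_eq.trans pres_eq_append_left pres_eq_append_right pres_eq_valid)

lemma cls_eq: "pres_eq S R w w' \<Longrightarrow> cls S R w = cls S R w'"
  by (auto intro: pres_eq.trans pres_eq.sym)

lemma cls_eq_iff: "valid_word S w \<Longrightarrow> cls S R w = cls S R w' \<longleftrightarrow> pres_eq S R w w'"
  using cls_eq by (metis mem_Collect_eq pres_eq.refl pres_eq.sym)

lemma PG_carrier: "carrier (presented_group S R) = {cls S R w | w. valid_word S w}"
  by (simp add: presented_group_def)

lemma PG_one: "\<one>\<^bsub>presented_group S R\<^esub> = cls S R []"
  by (simp add: presented_group_def)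

lemma PG_mult: "valid_word S a \<Longrightarrow> valid_word S b \<Longrightarrow>
   cls S R a \<otimes>\<^bsub>presented_group S R\<^esub> cls S R b = cls S R (a @ b)"
  apply (auto simp: presented_group_def)
  apply (meson pres_eq.sym pres_eq.trans pres_eq_cong)
  by (meson pres_eq.refl)

definition invw :: "'g word \<Rightarrow> 'g word" where
  "invw w = rev (map (\<lambda>(g,b). (g, \<not> b)) w)"

lemma valid_invw[simp]: "valid_word S (invw w) \<longleftrightarrow> valid_word S w"
  unfolding valid_word_def invw_def by (force simp: image_iff)

lemma invw_Cons: "invw (x # w) = invw w @ [(fst x, \<not> snd x)]"
  by (cases x) (simp add: invw_def)

lemma pres_eq_invw: "valid_word S w \<Longrightarrow> pres_eq S R (invw w @ w) []"
proof (induction w)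
  case Nil then show ?case by (simp add: invw_def pres_eq.refl)
next
  case (Cons x w)
  obtain g b where x: "x = (g,b)" by (cases x)
  have "pres_eq S R (invw w @ [(g, \<not> b), (g, \<not> \<not> b)] @ w) (invw w @ w)"
    using Cons.prems x by (intro pres_eq.cancel) auto
  then show ?case using Cons x by (auto simp: invw_Cons intro: pres_eq.trans)
qed

lemma PG_group: "group (presented_group S R)"
proof (rule groupI)
  fix x y assume "x \<in> carrier (presented_group S R)" "y \<in> carrier (presented_group S R)"
  then show "x \<otimes>\<^bsub>presented_group S R\<^esub> y \<in> carrier (presented_group S R)"
    by (auto simp: PG_carrier PG_mult)
next
  show "\<one>\<^bsub>presented_group S R\<^esub> \<in> carrier (presented_group S R)"
    by (auto simp: PG_carrier PG_one)
next
  fix x y z assume "x \<in> carrier (presented_group S R)" "y \<in> carrier (presented_group S R)"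
    "z \<in> carrier (presented_group S R)"
  then show "x \<otimes>\<^bsub>presented_group S R\<^esub> y \<otimes>\<^bsub>presented_group S R\<^esub> z =
     x \<otimes>\<^bsub>presented_group S R\<^esub> (y \<otimes>\<^bsub>presented_group S R\<^esub> z)"
    by (auto simp: PG_carrier PG_mult)
next
  fix x assume "x \<in> carrier (presented_group S R)"
  then show "\<one>\<^bsub>presented_group S R\<^esub> \<otimes>\<^bsub>presented_group S R\<^esub> x = x"
    using PG_mult[of S "[]"] by (auto simp: PG_carrier PG_one)
next
  fix x assume "x \<in> carrier (presented_group S R)"
  then obtain w where w: "valid_word S w" "x = cls S R w" by (auto simp: PG_carrier)
  show "\<exists>y\<in>carrier (presented_group S R). y \<otimes>\<^bsub>presented_group S R\<^esub> x = \<one>\<^bsub>presented_group S R\<^esub>"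
    apply (rule bexI[of _ "cls S R (invw w)"])
    using w PG_mult[of S "invw w" w R] pres_eq_invw[of S w R] cls_eq[of S R "invw w @ w" "[]"]
    by (auto simp: PG_carrier PG_one)
qed



fun exs :: "nat \<Rightarrow> uw_gen \<times> bool \<Rightarrow> int" where
  "exs t (Sigma i s, b) = (if s = t then (if b then -1 else 1) else 0)"
| "exs t (Rho i, b) = 0"

fun exr :: "uw_gen \<times> bool \<Rightarrow> int" where
  "exr (Rho i, b) = 1"
| "exr (Sigma i s, b) = 0"

abbreviation "RR n c \<equiv> uv_rels n c \<union> welded_rels n c"

lemma rels_inv: "(l, r) \<in> RR n c \<Longrightarrow>
   sum_list (map (exs t) l) = sum_list (map (exs t) r) \<and> sum_list (map exr l) mod 2 = sum_list (map exr r) mod 2"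
  unfolding uv_rels_def welded_rels_def
  apply (elim UnE CollectE exE conjE)
  by (simp_all add: rh_def sg_def)

lemma mod2_cong: "(x::int) mod 2 = y mod 2 \<Longrightarrow> (a + (x + b)) mod 2 = (a + (y + b)) mod 2"
  by (metis mod_add_cong)

lemma pres_eq_inv: "pres_eq S (RR n c) w w' \<Longrightarrow>
   sum_list (map (exs t) w) = sum_list (map (exs t) w') \<and> sum_list (map exr w) mod 2 = sum_list (map exr w') mod 2"
proof (induction rule: pres_eq.induct)
  case (cancel u v g b)
  have h: "(x + (1 + (1 + y))) mod 2 = (x + y) mod 2" for x y :: int
  proof -
    have "x + (1 + (1 + y)) = (x + y) + 2 * 1" by simp
    then show ?thesis by (simp only: mod_mult_self2)
  qed
  show ?case
  proof (cases g)
    case (Rho i) then show ?thesis unfolding map_append sum_list_append using h by simp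
  next
    case (Sigma i s) then show ?thesis unfolding map_append sum_list_append by simp
  qed
next
  case (rel l r u v)
  from rels_inv[OF rel(1), of t] have e1: "sum_list (map (exs t) l) = sum_list (map (exs t) r)"
     and e2: "sum_list (map exr l) mod 2 = sum_list (map exr r) mod 2" by auto
  show ?case unfolding map_append sum_list_append
    using e1 mod2_cong[OF e2, of "sum_list (map exr u)" "sum_list (map exr v)"] by simp
qed auto



abbreviation "AA c \<equiv> DirProd (product_group {1..c} (\<lambda>_. integer_group)) (integer_mod_group 2)"
abbreviation "CL n c w \<equiv> cls (uw_gens n c) (RR n c) w"

definition phw :: "nat \<Rightarrow> uw_gen word \<Rightarrow> (nat \<Rightarrow> int) \<times> int" where
  "phw c w = ((\<lambda>t\<in>{1..c}. sum_list (map (exs t) w)), sum_list (map exr w) mod 2)"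

definition phiG :: "nat \<Rightarrow> uw_gen word set \<Rightarrow> (nat \<Rightarrow> int) \<times> int" where
  "phiG c M = phw c (SOME w. w \<in> M)"

lemma G_eq: "UW n c = presented_group (uw_gens n c) (RR n c)" by (simp add: UW_def)

lemma group_G: "group (UW n c)" unfolding G_eq by (rule PG_group)

lemma group_A: "group (AA c)"
  by (intro DirProd_group product_group group_integer_group group_integer_mod_group)

lemma A_carrier: "carrier (AA c) = (\<Pi>\<^sub>E i\<in>{1..c}. (UNIV :: int set)) \<times> {0..<2}"
  by (simp add: carrier_integer_mod_group)

lemma A_mult: "(f, e) \<otimes>\<^bsub>AA c\<^esub> (f', e') = ((\<lambda>i\<in>{1..c}. f i + f' i), (e + e') mod 2)"
  by simp

lemma comm_A: "comm_group (AA c)"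
proof (rule group.group_comm_groupI[OF group_A])
  fix x y assume "x \<in> carrier (AA c)" "y \<in> carrier (AA c)"
  then show "x \<otimes>\<^bsub>AA c\<^esub> y = y \<otimes>\<^bsub>AA c\<^esub> x"
    by (cases x, cases y) (simp add: add.commute)
qed

lemma phw_in: "phw c w \<in> carrier (AA c)"
  by (simp add: phw_def A_carrier carrier_integer_mod_group)

lemma phw_eq: "pres_eq (uw_gens n c) (RR n c) w w' \<Longrightarrow> phw c w = phw c w'"
  unfolding phw_def using pres_eq_inv[of "uw_gens n c" n c w w'] by auto

lemma phiG_cls: "valid_word (uw_gens n c) w \<Longrightarrow> phiG c (CL n c w) = phw c w"
  unfolding phiG_def
  by (rule someI2[of _ w]) (auto intro: pres_eq.refl phw_eq[symmetric])

lemma phw_append: "phw c (a @ b) = phw c a \<otimes>\<^bsub>AA c\<^esub> phw c b"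
  by (auto simp add: phw_def A_mult mod_add_eq intro!: restrict_ext)

lemma G_carrier: "carrier (UW n c) = {CL n c w | w. valid_word (uw_gens n c) w}"
  by (simp add: G_eq PG_carrier)

lemma G_mult: "valid_word (uw_gens n c) a \<Longrightarrow> valid_word (uw_gens n c) b \<Longrightarrow>
   CL n c a \<otimes>\<^bsub>UW n c\<^esub> CL n c b = CL n c (a @ b)"
  by (simp add: G_eq PG_mult)

lemma G_one: "\<one>\<^bsub>UW n c\<^esub> = CL n c []"
  by (simp add: G_eq PG_one)

lemma phiG_hom: "phiG c \<in> hom (UW n c) (AA c)"
proof (rule homI)
  fix x assume "x \<in> carrier (UW n c)"
  then show "phiG c x \<in> carrier (AA c)" using phw_in[of c] by (auto simp del: carrier_DirProd simp: G_carrier phiG_cls)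
next
  fix x y assume "x \<in> carrier (UW n c)" "y \<in> carrier (UW n c)"
  then show "phiG c (x \<otimes>\<^bsub>UW n c\<^esub> y) = phiG c x \<otimes>\<^bsub>AA c\<^esub> phiG c y"
    by (auto simp: G_carrier G_mult phiG_cls phw_append)
qed

lemma group_hom_phiG: "group_hom (UW n c) (AA c) (phiG c)"
  unfolding group_hom_def group_hom_axioms_def using group_G group_A phiG_hom by blast



lemma sum_list_concat': "sum_list (concat xss) = sum_list (map sum_list (xss :: int list list))"
  by (induction xss) auto

definition wordof :: "nat \<Rightarrow> (nat \<Rightarrow> int) \<Rightarrow> int \<Rightarrow> uw_gen word" where
  "wordof c f e = concat (map (\<lambda>t. replicate (nat \<bar>f t\<bar>) (Sigma 1 t, f t < 0)) [1..<c+1])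
     @ replicate (nat e) (Rho 1, False)"

lemma Rho1_in: "n \<ge> 2 \<Longrightarrow> Rho 1 \<in> uw_gens n c"
proof -
  assume "n \<ge> 2" then have "1 \<le> (1::nat) \<and> 1 \<le> n - 1" by simp
  then show ?thesis unfolding uw_gens_def by blast
qed

lemma Sigma1_in: "n \<ge> 2 \<Longrightarrow> 1 \<le> t \<Longrightarrow> t \<le> c \<Longrightarrow> Sigma 1 t \<in> uw_gens n c"
proof -
  assume "n \<ge> 2" "1 \<le> t" "t \<le> c" then have "1 \<le> (1::nat) \<and> 1 \<le> n - 1 \<and> 1 \<le> t \<and> t \<le> c" by simp
  then show ?thesis unfolding uw_gens_def by blast
qed

lemma valid_wordof: "n \<ge> 2 \<Longrightarrow> valid_word (uw_gens n c) (wordof c f e)"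
  unfolding valid_word_def wordof_def using Rho1_in Sigma1_in by (auto simp: set_replicate_conv_if split: if_splits)

lemma exs_wordof: "s \<in> {1..c} \<Longrightarrow> sum_list (map (exs s) (wordof c f e)) = f s"
proof -
  assume s: "s \<in> {1..c}"
  have "sum_list (map (exs s) (wordof c f e)) =
        sum_list (map (\<lambda>t. if t = s then f t else 0) [1..<c+1])"
    unfolding wordof_def map_append sum_list_append map_concat sum_list_concat' map_map
    by (auto simp: sum_list_replicate o_def intro!: arg_cong[where f=sum_list])
  also have "\<dots> = sum (\<lambda>t. if t = s then f t else 0) {1..<c+1}"
    by (simp add: sum_set_upt_conv_sum_list_nat[symmetric])
  also have "\<dots> = f s" using s by simp
  finally show ?thesis .
qed

lemma exr_wordof: "e \<in> {0..<2} \<Longrightarrow> sum_list (map exr (wordof c f e)) mod 2 = e"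
  unfolding wordof_def map_append sum_list_append map_concat sum_list_concat' map_map
  by (auto simp: sum_list_replicate o_def)

lemma phw_wordof: "f \<in> (\<Pi>\<^sub>E i\<in>{1..c}. (UNIV :: int set)) \<Longrightarrow> e \<in> {0..<2} \<Longrightarrow> phw c (wordof c f e) = (f, e)"
proof -
  assume f: "f \<in> (\<Pi>\<^sub>E i\<in>{1..c}. (UNIV :: int set))" and e: "e \<in> {0..<2}"
  have "(\<lambda>t\<in>{1..c}. sum_list (map (exs t) (wordof c f e))) = f"
  proof
    fix t show "(\<lambda>t\<in>{1..c}. sum_list (map (exs t) (wordof c f e))) t = f t"
    proof (cases "t \<in> {1..c}")
      case True then show ?thesis using exs_wordof[OF True] by simp
    next
      case False then show ?thesis using PiE_arb[OF f False] by auto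
    qed
  qed
  then show ?thesis unfolding phw_def using exr_wordof[OF e] by simp
qed

lemma phiG_surj: "n \<ge> 2 \<Longrightarrow> phiG c ` carrier (UW n c) = carrier (AA c)"
proof
  show "phiG c ` carrier (UW n c) \<subseteq> carrier (AA c)"
    using group_hom.hom_closed[OF group_hom_phiG] by blast
next
  assume n: "n \<ge> 2"
  show "carrier (AA c) \<subseteq> phiG c ` carrier (UW n c)"
  proof
    fix x assume "x \<in> carrier (AA c)"
    then obtain f e where x: "x = (f, e)" "f \<in> (\<Pi>\<^sub>E i\<in>{1..c}. (UNIV :: int set))" "e \<in> {0..<2}"
      unfolding A_carrier by auto
    have "CL n c (wordof c f e) \<in> carrier (UW n c)"
      using valid_wordof[OF n] by (auto simp: G_carrier)
    moreover have "phiG c (CL n c (wordof c f e)) = x"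
      using phiG_cls[OF valid_wordof[OF n]] phw_wordof x by simp
    ultimately show "x \<in> phiG c ` carrier (UW n c)" by blast
  qed
qed



lemma comm_commutator: "comm_group H \<Longrightarrow> a \<in> carrier H \<Longrightarrow> b \<in> carrier H \<Longrightarrow>
   a \<otimes>\<^bsub>H\<^esub> b \<otimes>\<^bsub>H\<^esub> inv\<^bsub>H\<^esub> a \<otimes>\<^bsub>H\<^esub> inv\<^bsub>H\<^esub> b = \<one>\<^bsub>H\<^esub>"
proof -
  assume H: "comm_group H" and a: "a \<in> carrier H" and b: "b \<in> carrier H"
  interpret H: comm_group H by (rule H)
  have "a \<otimes>\<^bsub>H\<^esub> b \<otimes>\<^bsub>H\<^esub> inv\<^bsub>H\<^esub> a \<otimes>\<^bsub>H\<^esub> inv\<^bsub>H\<^esub> b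
      = a \<otimes>\<^bsub>H\<^esub> (b \<otimes>\<^bsub>H\<^esub> (inv\<^bsub>H\<^esub> a \<otimes>\<^bsub>H\<^esub> inv\<^bsub>H\<^esub> b))"
    using a b by (simp add: H.m_assoc)
  also have "b \<otimes>\<^bsub>H\<^esub> (inv\<^bsub>H\<^esub> a \<otimes>\<^bsub>H\<^esub> inv\<^bsub>H\<^esub> b) = inv\<^bsub>H\<^esub> a \<otimes>\<^bsub>H\<^esub> (b \<otimes>\<^bsub>H\<^esub> inv\<^bsub>H\<^esub> b)"
    using a b by (simp only: H.m_lcomm H.inv_closed)
  also have "\<dots> = inv\<^bsub>H\<^esub> a" using a b by simp
  finally show ?thesis using a by simp
qed

lemma derived_sub_kernel: "derived (UW n c) (carrier (UW n c)) \<subseteq> kernel (UW n c) (AA c) (phiG c)"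
proof -
  interpret h: group_hom "UW n c" "AA c" "phiG c" by (rule group_hom_phiG)
  have key: "a \<otimes>\<^bsub>UW n c\<^esub> b \<otimes>\<^bsub>UW n c\<^esub> inv\<^bsub>UW n c\<^esub> a \<otimes>\<^bsub>UW n c\<^esub> inv\<^bsub>UW n c\<^esub> b
      \<in> kernel (UW n c) (AA c) (phiG c)"
    if ab: "a \<in> carrier (UW n c)" "b \<in> carrier (UW n c)" for a b
  proof -
    have "phiG c (a \<otimes>\<^bsub>UW n c\<^esub> b \<otimes>\<^bsub>UW n c\<^esub> inv\<^bsub>UW n c\<^esub> a \<otimes>\<^bsub>UW n c\<^esub> inv\<^bsub>UW n c\<^esub> b)
       = phiG c a \<otimes>\<^bsub>AA c\<^esub> phiG c b \<otimes>\<^bsub>AA c\<^esub> inv\<^bsub>AA c\<^esub> phiG c a \<otimes>\<^bsub>AA c\<^esub> inv\<^bsub>AA c\<^esub> phiG c b"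
      using ab by (simp only: h.hom_mult h.hom_inv h.G.m_closed h.G.inv_closed)
    also have "\<dots> = \<one>\<^bsub>AA c\<^esub>"
      by (rule comm_commutator[OF comm_A]) (rule h.hom_closed, rule ab)+
    finally show ?thesis
      using ab by (simp only: kernel_def mem_Collect_eq h.G.m_closed h.G.inv_closed simp_thms)
  qed
  have "derived_set (UW n c) (carrier (UW n c)) \<subseteq> kernel (UW n c) (AA c) (phiG c)"
    by (intro UN_least insert_subsetI empty_subsetI key)
  then show ?thesis unfolding derived_def
    by (rule h.G.generate_subgroup_incl[OF _ h.subgroup_kernel])
qed



lemma comm_cancel1: "comm_group H \<Longrightarrow> a \<in> carrier H \<Longrightarrow> b \<in> carrier H \<Longrightarrow>
   a \<otimes>\<^bsub>H\<^esub> b \<otimes>\<^bsub>H\<^esub> a = b \<otimes>\<^bsub>H\<^esub> a \<otimes>\<^bsub>H\<^esub> b \<Longrightarrow> a = b"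
proof -
  assume H: "comm_group H" and a: "a \<in> carrier H" and b: "b \<in> carrier H"
    and e: "a \<otimes>\<^bsub>H\<^esub> b \<otimes>\<^bsub>H\<^esub> a = b \<otimes>\<^bsub>H\<^esub> a \<otimes>\<^bsub>H\<^esub> b"
  interpret H: comm_group H by (rule H)
  have "b \<otimes>\<^bsub>H\<^esub> a \<otimes>\<^bsub>H\<^esub> b = a \<otimes>\<^bsub>H\<^esub> b \<otimes>\<^bsub>H\<^esub> b"
    using a b by (simp add: H.m_comm[of b a])
  with e have "(a \<otimes>\<^bsub>H\<^esub> b) \<otimes>\<^bsub>H\<^esub> a = (a \<otimes>\<^bsub>H\<^esub> b) \<otimes>\<^bsub>H\<^esub> b" by simp
  then show "a = b" using a b by (metis H.Units_eq H.Units_l_cancel H.m_closed)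
qed

lemma comm_cancel2: "comm_group H \<Longrightarrow> a \<in> carrier H \<Longrightarrow> b \<in> carrier H \<Longrightarrow> s \<in> carrier H \<Longrightarrow> s' \<in> carrier H \<Longrightarrow>
   a \<otimes>\<^bsub>H\<^esub> b \<otimes>\<^bsub>H\<^esub> s = s' \<otimes>\<^bsub>H\<^esub> a \<otimes>\<^bsub>H\<^esub> b \<Longrightarrow> s = s'"
proof -
  assume H: "comm_group H" and a: "a \<in> carrier H" and b: "b \<in> carrier H"
    and s: "s \<in> carrier H" and s': "s' \<in> carrier H"
    and e: "a \<otimes>\<^bsub>H\<^esub> b \<otimes>\<^bsub>H\<^esub> s = s' \<otimes>\<^bsub>H\<^esub> a \<otimes>\<^bsub>H\<^esub> b"
  interpret H: comm_group H by (rule H)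
  have "s' \<otimes>\<^bsub>H\<^esub> a \<otimes>\<^bsub>H\<^esub> b = (a \<otimes>\<^bsub>H\<^esub> b) \<otimes>\<^bsub>H\<^esub> s'"
    using a b s' by (simp add: H.m_assoc H.m_comm[of s'])
  with e have "(a \<otimes>\<^bsub>H\<^esub> b) \<otimes>\<^bsub>H\<^esub> s = (a \<otimes>\<^bsub>H\<^esub> b) \<otimes>\<^bsub>H\<^esub> s'" by simp
  then show "s = s'" using a b s s' by (metis H.Units_eq H.Units_l_cancel H.m_closed)
qed

lemma Rho_in: "1 \<le> i \<Longrightarrow> i \<le> n - 1 \<Longrightarrow> Rho i \<in> uw_gens n c"
  unfolding uw_gens_def by blast

lemma Sigma_in: "1 \<le> i \<Longrightarrow> i \<le> n - 1 \<Longrightarrow> 1 \<le> t \<Longrightarrow> t \<le> c \<Longrightarrow> Sigma i t \<in> uw_gens n c"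
  unfolding uw_gens_def by blast

lemma Rho_in_D: "Rho i \<in> uw_gens n c \<Longrightarrow> 1 \<le> i \<and> i \<le> n - 1"
  unfolding uw_gens_def by blast

lemma Sigma_in_D: "Sigma i t \<in> uw_gens n c \<Longrightarrow> 1 \<le> i \<and> i \<le> n - 1 \<and> 1 \<le> t \<and> t \<le> c"
  unfolding uw_gens_def by blast

lemma CL_rel: "(l, r) \<in> RR n c \<Longrightarrow> valid_word (uw_gens n c) l \<Longrightarrow> valid_word (uw_gens n c) r \<Longrightarrow>
   CL n c l = CL n c r"
  using pres_eq.rel[of l r "RR n c" "uw_gens n c" "[]" "[]"] cls_eq by simp

lemma CL_in: "valid_word (uw_gens n c) w \<Longrightarrow> CL n c w \<in> carrier (UW n c)"
  by (auto simp: G_carrier)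

lemma CL_Cons: "fst x \<in> uw_gens n c \<Longrightarrow> valid_word (uw_gens n c) w \<Longrightarrow>
   CL n c (x # w) = CL n c [x] \<otimes>\<^bsub>UW n c\<^esub> CL n c w"
  using G_mult[of n c "[x]" w] by simp

lemma CL3: "fst x \<in> uw_gens n c \<Longrightarrow> fst y \<in> uw_gens n c \<Longrightarrow> fst z \<in> uw_gens n c \<Longrightarrow>
   CL n c [x, y, z] = CL n c [x] \<otimes>\<^bsub>UW n c\<^esub> CL n c [y] \<otimes>\<^bsub>UW n c\<^esub> CL n c [z]"
  using G_mult[of n c "[x]" "[y]"] G_mult[of n c "[x, y]" "[z]"] by simp

lemma CL2: "fst x \<in> uw_gens n c \<Longrightarrow> fst y \<in> uw_gens n c \<Longrightarrow>
   CL n c [x, y] = CL n c [x] \<otimes>\<^bsub>UW n c\<^esub> CL n c [y]"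
  using G_mult[of n c "[x]" "[y]"] by simp

lemma CL_inv: "g \<in> uw_gens n c \<Longrightarrow> CL n c [(g, True)] = inv\<^bsub>UW n c\<^esub> CL n c [(g, False)]"
proof -
  assume g: "g \<in> uw_gens n c"
  interpret G: group "UW n c" by (rule group_G)
  have "pres_eq (uw_gens n c) (RR n c) ([] @ [(g, True), (g, \<not> True)] @ []) ([] @ [])"
    using g by (intro pres_eq.cancel) auto
  then have "CL n c [(g, True), (g, False)] = CL n c []" using cls_eq by simp
  then have "CL n c [(g, True)] \<otimes>\<^bsub>UW n c\<^esub> CL n c [(g, False)] = \<one>\<^bsub>UW n c\<^esub>"
    using CL2[of "(g, True)" n c "(g, False)"] g by (simp add: G_one)
  then show ?thesis
    using g by (intro G.inv_equality[symmetric]) (auto intro: CL_in)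
qed



definition DD :: "nat \<Rightarrow> nat \<Rightarrow> uw_gen word set set" where
  "DD n c = derived (UW n c) (carrier (UW n c))"
abbreviation "QQ n c \<equiv> UW n c Mod DD n c"
definition pii :: "nat \<Rightarrow> nat \<Rightarrow> uw_gen word set \<Rightarrow> uw_gen word set set" where
  "pii n c x = DD n c #>\<^bsub>UW n c\<^esub> x"

lemma comm_Q: "comm_group (QQ n c)"
  unfolding DD_def by (rule group.derived_quot_is_comm_group[OF group_G])

lemma normal_D: "DD n c \<lhd> UW n c"
  unfolding DD_def by (rule group.derived_self_is_normal[OF group_G])

lemma group_hom_pii: "group_hom (UW n c) (QQ n c) (pii n c)"
  unfolding group_hom_def group_hom_axioms_def
  using group_G comm_Q normal.r_coset_hom_Mod[OF normal_D] unfolding pii_def comm_group_def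
  by blast

lemma pii3: "x \<in> carrier (UW n c) \<Longrightarrow> y \<in> carrier (UW n c) \<Longrightarrow> z \<in> carrier (UW n c) \<Longrightarrow>
  pii n c (x \<otimes>\<^bsub>UW n c\<^esub> y \<otimes>\<^bsub>UW n c\<^esub> z) = pii n c x \<otimes>\<^bsub>QQ n c\<^esub> pii n c y \<otimes>\<^bsub>QQ n c\<^esub> pii n c z"
proof -
  assume xyz: "x \<in> carrier (UW n c)" "y \<in> carrier (UW n c)" "z \<in> carrier (UW n c)"
  interpret h: group_hom "UW n c" "QQ n c" "pii n c" by (rule group_hom_pii)
  show ?thesis using xyz by (simp only: h.hom_mult h.G.m_closed)
qed

abbreviation "pr n c i \<equiv> pii n c (CL n c [rh i])"
abbreviation "ps n c i t \<equiv> pii n c (CL n c [sg i t])"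

lemma pr_in: "1 \<le> i \<Longrightarrow> i \<le> n - 1 \<Longrightarrow> pr n c i \<in> carrier (QQ n c)"
  by (rule group_hom.hom_closed[OF group_hom_pii], rule CL_in) (simp add: rh_def Rho_in)

lemma ps_in: "1 \<le> i \<Longrightarrow> i \<le> n - 1 \<Longrightarrow> 1 \<le> t \<Longrightarrow> t \<le> c \<Longrightarrow> ps n c i t \<in> carrier (QQ n c)"
  by (rule group_hom.hom_closed[OF group_hom_pii], rule CL_in) (simp add: sg_def Sigma_in)

lemma pr_step: "1 \<le> i \<Longrightarrow> i \<le> n - 2 \<Longrightarrow> pr n c i = pr n c (i + 1)"
proof -
  assume i: "1 \<le> i" "i \<le> n - 2"
  interpret h: group_hom "UW n c" "QQ n c" "pii n c" by (rule group_hom_pii)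
  have r1: "Rho i \<in> uw_gens n c" "Rho (i+1) \<in> uw_gens n c" using i by (auto intro!: Rho_in)
  have "([rh i, rh (i+1), rh i], [rh (i+1), rh i, rh (i+1)]) \<in> RR n c"
    using i unfolding uv_rels_def by blast
  then have "CL n c [rh i, rh (i+1), rh i] = CL n c [rh (i+1), rh i, rh (i+1)]"
    using r1 by (intro CL_rel) (auto simp: rh_def)
  then have "CL n c [rh i] \<otimes>\<^bsub>UW n c\<^esub> CL n c [rh (i+1)] \<otimes>\<^bsub>UW n c\<^esub> CL n c [rh i]
     = CL n c [rh (i+1)] \<otimes>\<^bsub>UW n c\<^esub> CL n c [rh i] \<otimes>\<^bsub>UW n c\<^esub> CL n c [rh (i+1)]"
    using r1 by (simp add: CL3 rh_def)
  then have e: "pii n c (CL n c [rh i] \<otimes>\<^bsub>UW n c\<^esub> CL n c [rh (i+1)] \<otimes>\<^bsub>UW n c\<^esub> CL n c [rh i])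
     = pii n c (CL n c [rh (i+1)] \<otimes>\<^bsub>UW n c\<^esub> CL n c [rh i] \<otimes>\<^bsub>UW n c\<^esub> CL n c [rh (i+1)])"
    by (rule arg_cong)
  have c1: "CL n c [rh i] \<in> carrier (UW n c)" and c2: "CL n c [rh (i+1)] \<in> carrier (UW n c)"
    using r1 by (auto intro!: CL_in simp: rh_def)
  have "pr n c i \<otimes>\<^bsub>QQ n c\<^esub> pr n c (i+1) \<otimes>\<^bsub>QQ n c\<^esub> pr n c i
     = pr n c (i+1) \<otimes>\<^bsub>QQ n c\<^esub> pr n c i \<otimes>\<^bsub>QQ n c\<^esub> pr n c (i+1)"
    using e unfolding pii3[OF c1 c2 c1] pii3[OF c2 c1 c2] .
  then show ?thesis
    by (rule comm_cancel1[OF comm_Q, rotated 2]) (use i in \<open>auto intro!: pr_in\<close>)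
qed



lemma pii2: "x \<in> carrier (UW n c) \<Longrightarrow> y \<in> carrier (UW n c) \<Longrightarrow>
  pii n c (x \<otimes>\<^bsub>UW n c\<^esub> y) = pii n c x \<otimes>\<^bsub>QQ n c\<^esub> pii n c y"
  by (rule group_hom.hom_mult[OF group_hom_pii])

lemma ps_step: "1 \<le> i \<Longrightarrow> i \<le> n - 2 \<Longrightarrow> 1 \<le> t \<Longrightarrow> t \<le> c \<Longrightarrow> ps n c i t = ps n c (i + 1) t"
proof -
  assume i: "1 \<le> i" "i \<le> n - 2" and t: "1 \<le> t" "t \<le> c"
  have r1: "Rho i \<in> uw_gens n c" "Rho (i+1) \<in> uw_gens n c" using i by (auto intro!: Rho_in)
  have s1: "Sigma i t \<in> uw_gens n c" "Sigma (i+1) t \<in> uw_gens n c" using i t by (auto intro!: Sigma_in)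
  have "([rh i, rh (i+1), sg i t], [sg (i+1) t, rh i, rh (i+1)]) \<in> RR n c"
    using i t unfolding uv_rels_def by blast
  then have "CL n c [rh i, rh (i+1), sg i t] = CL n c [sg (i+1) t, rh i, rh (i+1)]"
    using r1 s1 by (intro CL_rel) (auto simp: rh_def sg_def)
  then have "CL n c [rh i] \<otimes>\<^bsub>UW n c\<^esub> CL n c [rh (i+1)] \<otimes>\<^bsub>UW n c\<^esub> CL n c [sg i t]
     = CL n c [sg (i+1) t] \<otimes>\<^bsub>UW n c\<^esub> CL n c [rh i] \<otimes>\<^bsub>UW n c\<^esub> CL n c [rh (i+1)]"
    using r1 s1 by (simp add: CL3 rh_def sg_def)
  then have e: "pii n c (CL n c [rh i] \<otimes>\<^bsub>UW n c\<^esub> CL n c [rh (i+1)] \<otimes>\<^bsub>UW n c\<^esub> CL n c [sg i t])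
     = pii n c (CL n c [sg (i+1) t] \<otimes>\<^bsub>UW n c\<^esub> CL n c [rh i] \<otimes>\<^bsub>UW n c\<^esub> CL n c [rh (i+1)])"
    by (rule arg_cong)
  have c1: "CL n c [rh i] \<in> carrier (UW n c)" and c2: "CL n c [rh (i+1)] \<in> carrier (UW n c)"
    using r1 by (auto intro!: CL_in simp: rh_def)
  have c3: "CL n c [sg i t] \<in> carrier (UW n c)" and c4: "CL n c [sg (i+1) t] \<in> carrier (UW n c)"
    using s1 by (auto intro!: CL_in simp: sg_def)
  have "pr n c i \<otimes>\<^bsub>QQ n c\<^esub> pr n c (i+1) \<otimes>\<^bsub>QQ n c\<^esub> ps n c i t
     = ps n c (i+1) t \<otimes>\<^bsub>QQ n c\<^esub> pr n c i \<otimes>\<^bsub>QQ n c\<^esub> pr n c (i+1)"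
    using e unfolding pii3[OF c1 c2 c3] pii3[OF c4 c1 c2] .
  then show ?thesis
    by (rule comm_cancel2[OF comm_Q, rotated 4]) (use i t in \<open>auto intro!: pr_in ps_in\<close>)
qed

lemma pr_all: "1 \<le> i \<Longrightarrow> i \<le> n - 1 \<Longrightarrow> pr n c i = pr n c 1"
proof (induction i)
  case 0 then show ?case by simp
next
  case (Suc k)
  show ?case
  proof (cases "k = 0")
    case True then show ?thesis by simp
  next
    case False
    then have "pr n c k = pr n c 1" using Suc by simp
    moreover have "pr n c k = pr n c (k + 1)" using False Suc.prems by (intro pr_step) auto
    ultimately show ?thesis by simp
  qed
qed

lemma ps_all: "1 \<le> i \<Longrightarrow> i \<le> n - 1 \<Longrightarrow> 1 \<le> t \<Longrightarrow> t \<le> c \<Longrightarrow> ps n c i t = ps n c 1 t"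
proof (induction i)
  case 0 then show ?case by simp
next
  case (Suc k)
  show ?case
  proof (cases "k = 0")
    case True then show ?thesis by simp
  next
    case False
    then have "ps n c k t = ps n c 1 t" using Suc by simp
    moreover have "ps n c k t = ps n c (k + 1) t" using False Suc.prems by (intro ps_step) auto
    ultimately show ?thesis by simp
  qed
qed

lemma rr_sq: "n \<ge> 2 \<Longrightarrow> pr n c 1 \<otimes>\<^bsub>QQ n c\<^esub> pr n c 1 = \<one>\<^bsub>QQ n c\<^esub>"
proof -
  assume n: "n \<ge> 2"
  have r1: "Rho 1 \<in> uw_gens n c" using n by (auto intro!: Rho_in)
  have "([rh 1, rh 1], []) \<in> RR n c"
    using n unfolding uv_rels_def by auto
  then have "CL n c [rh 1, rh 1] = CL n c []"
    using r1 by (intro CL_rel) (auto simp: rh_def)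
  then have "CL n c [rh 1] \<otimes>\<^bsub>UW n c\<^esub> CL n c [rh 1] = \<one>\<^bsub>UW n c\<^esub>"
    using r1 by (simp add: CL2 rh_def G_one)
  then have "pii n c (CL n c [rh 1] \<otimes>\<^bsub>UW n c\<^esub> CL n c [rh 1]) = pii n c \<one>\<^bsub>UW n c\<^esub>" by simp
  moreover have c1: "CL n c [rh 1] \<in> carrier (UW n c)" using r1 by (auto intro!: CL_in simp: rh_def)
  ultimately show ?thesis
    unfolding pii2[OF c1 c1] group_hom.hom_one[OF group_hom_pii] by blast
qed



lemma rpow_mod2: "group H \<Longrightarrow> r \<in> carrier H \<Longrightarrow> r \<otimes>\<^bsub>H\<^esub> r = \<one>\<^bsub>H\<^esub> \<Longrightarrow>
   r [^]\<^bsub>H\<^esub> (k mod 2) = r [^]\<^bsub>H\<^esub> (k::int)"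
proof -
  assume H: "group H" and r: "r \<in> carrier H" and rr: "r \<otimes>\<^bsub>H\<^esub> r = \<one>\<^bsub>H\<^esub>"
  interpret H: group H by (rule H)
  have r2: "r [^]\<^bsub>H\<^esub> (2::int) = \<one>\<^bsub>H\<^esub>"
    using H.int_pow_mult[OF r, of 1 1] r rr by simp
  have "r [^]\<^bsub>H\<^esub> k = r [^]\<^bsub>H\<^esub> (2 * (k div 2) + k mod 2)" by simp
  also have "\<dots> = r [^]\<^bsub>H\<^esub> (2 * (k div 2)) \<otimes>\<^bsub>H\<^esub> r [^]\<^bsub>H\<^esub> (k mod 2)"
    by (rule H.int_pow_mult[OF r])
  also have "r [^]\<^bsub>H\<^esub> (2 * (k div 2)) = \<one>\<^bsub>H\<^esub>"
    using H.int_pow_pow[OF r, of 2 "k div 2"] r2 by simp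
  finally show ?thesis using r by simp
qed

lemma comm4: "comm_group H \<Longrightarrow> a \<in> carrier H \<Longrightarrow> b \<in> carrier H \<Longrightarrow> c \<in> carrier H \<Longrightarrow> d \<in> carrier H \<Longrightarrow>
  (a \<otimes>\<^bsub>H\<^esub> c) \<otimes>\<^bsub>H\<^esub> (b \<otimes>\<^bsub>H\<^esub> d) = (a \<otimes>\<^bsub>H\<^esub> b) \<otimes>\<^bsub>H\<^esub> (c \<otimes>\<^bsub>H\<^esub> d)"
proof -
  assume H: "comm_group H" and abcd: "a \<in> carrier H" "b \<in> carrier H" "c \<in> carrier H" "d \<in> carrier H"
  interpret H: comm_group H by (rule H)
  show ?thesis using abcd by (simp add: H.m_assoc H.m_lcomm[of c b])
qed

definition canon :: "nat \<Rightarrow> nat \<Rightarrow> (nat \<Rightarrow> int) \<times> int \<Rightarrow> uw_gen word set set" where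
  "canon n c x = finprod (QQ n c) (\<lambda>t. ps n c 1 t [^]\<^bsub>QQ n c\<^esub> (fst x t)) {1..c}
      \<otimes>\<^bsub>QQ n c\<^esub> (pr n c 1 [^]\<^bsub>QQ n c\<^esub> (snd x))"

lemma A_mult': "f \<in> (\<Pi>\<^sub>E i\<in>{1..c}. (UNIV :: int set)) \<Longrightarrow> x \<otimes>\<^bsub>AA c\<^esub> y = ((\<lambda>i\<in>{1..c}. fst x i + fst y i), (snd x + snd y) mod 2)"
  by (simp add: mult_DirProd')

lemma canon_hom: "n \<ge> 2 \<Longrightarrow> canon n c \<in> hom (AA c) (QQ n c)"
proof -
  assume n: "n \<ge> 2"
  interpret Q: comm_group "QQ n c" by (rule comm_Q)
  have r: "pr n c 1 \<in> carrier (QQ n c)" using n by (intro pr_in) auto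
  have s: "ps n c 1 t \<in> carrier (QQ n c)" if "t \<in> {1..c}" for t using n that by (intro ps_in) auto
  have rr: "pr n c 1 \<otimes>\<^bsub>QQ n c\<^esub> pr n c 1 = \<one>\<^bsub>QQ n c\<^esub>" by (rule rr_sq[OF n])
  have cl: "canon n c x \<in> carrier (QQ n c)" for x
    unfolding canon_def using r s by (intro Q.m_closed Q.finprod_closed Q.int_pow_closed funcsetI) auto
  show ?thesis
  proof (rule homI)
    fix x show "canon n c x \<in> carrier (QQ n c)" by (rule cl)
  next
    fix x y assume x: "x \<in> carrier (AA c)" and y: "y \<in> carrier (AA c)"
    let ?s = "ps n c 1" and ?r = "pr n c 1"
    have xy: "x \<otimes>\<^bsub>AA c\<^esub> y = ((\<lambda>i\<in>{1..c}. fst x i + fst y i), (snd x + snd y) mod 2)"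
      by (simp add: mult_DirProd')
    have fp: "finprod (QQ n c) (\<lambda>t. ?s t [^]\<^bsub>QQ n c\<^esub> ((\<lambda>i\<in>{1..c}. fst x i + fst y i) t)) {1..c}
       = finprod (QQ n c) (\<lambda>t. ?s t [^]\<^bsub>QQ n c\<^esub> fst x t \<otimes>\<^bsub>QQ n c\<^esub> ?s t [^]\<^bsub>QQ n c\<^esub> fst y t) {1..c}"
      using s by (intro Q.finprod_cong' funcsetI Q.m_closed Q.int_pow_closed) (auto simp: Q.int_pow_mult)
    also have "\<dots> = finprod (QQ n c) (\<lambda>t. ?s t [^]\<^bsub>QQ n c\<^esub> fst x t) {1..c} \<otimes>\<^bsub>QQ n c\<^esub>
                     finprod (QQ n c) (\<lambda>t. ?s t [^]\<^bsub>QQ n c\<^esub> fst y t) {1..c}"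
      using s by (intro Q.finprod_multf funcsetI) auto
    finally have fp': "finprod (QQ n c) (\<lambda>t. ?s t [^]\<^bsub>QQ n c\<^esub> ((\<lambda>i\<in>{1..c}. fst x i + fst y i) t)) {1..c} = 
        finprod (QQ n c) (\<lambda>t. ?s t [^]\<^bsub>QQ n c\<^esub> fst x t) {1..c} \<otimes>\<^bsub>QQ n c\<^esub>
                     finprod (QQ n c) (\<lambda>t. ?s t [^]\<^bsub>QQ n c\<^esub> fst y t) {1..c}" .
    have rp: "?r [^]\<^bsub>QQ n c\<^esub> ((snd x + snd y) mod 2) = ?r [^]\<^bsub>QQ n c\<^esub> snd x \<otimes>\<^bsub>QQ n c\<^esub> ?r [^]\<^bsub>QQ n c\<^esub> snd y"
      using rpow_mod2[OF Q.is_group r rr] Q.int_pow_mult[OF r] by simp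
    have c1: "finprod (QQ n c) (\<lambda>t. ?s t [^]\<^bsub>QQ n c\<^esub> fst z t) {1..c} \<in> carrier (QQ n c)" for z :: "(nat \<Rightarrow> int) \<times> int"
      using s by (intro Q.finprod_closed Q.int_pow_closed funcsetI) auto
    show "canon n c (x \<otimes>\<^bsub>AA c\<^esub> y) = canon n c x \<otimes>\<^bsub>QQ n c\<^esub> canon n c y"
      unfolding xy canon_def fst_conv snd_conv fp' rp
      by (rule comm4[OF comm_Q c1 _ c1]) (use r in auto)
  qed
qed

lemma group_hom_canon: "n \<ge> 2 \<Longrightarrow> group_hom (AA c) (QQ n c) (canon n c)"
  unfolding group_hom_def group_hom_axioms_def
  using group_A comm_Q canon_hom unfolding comm_group_def by blast



lemma letter_False: "n \<ge> 2 \<Longrightarrow> g \<in> uw_gens n c \<Longrightarrow>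
   pii n c (CL n c [(g, False)]) = canon n c (phiG c (CL n c [(g, False)]))"
proof -
  assume n: "n \<ge> 2" and g: "g \<in> uw_gens n c"
  interpret Q: comm_group "QQ n c" by (rule comm_Q)
  have r: "pr n c 1 \<in> carrier (QQ n c)" using n by (intro pr_in) auto
  have s: "ps n c 1 t \<in> carrier (QQ n c)" if "t \<in> {1..c}" for t using n that by (intro ps_in) auto
  have vg: "valid_word (uw_gens n c) [(g, False)]" using g by simp
  show ?thesis
  proof (cases g)
    case (Rho i)
    then have i: "1 \<le> i" "i \<le> n - 1" using Rho_in_D g by auto
    have ph: "phiG c (CL n c [(g, False)]) = ((\<lambda>t\<in>{1..c}. 0), 1)"
      unfolding phiG_cls[OF vg] phw_def using Rho by simp
    have "finprod (QQ n c) (\<lambda>t. ps n c 1 t [^]\<^bsub>QQ n c\<^esub> ((\<lambda>t\<in>{1..c}. 0::int) t)) {1..c} = \<one>\<^bsub>QQ n c\<^esub>"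
      by (rule Q.finprod_one_eqI) simp
    then have "canon n c (phiG c (CL n c [(g, False)])) = pr n c 1"
      unfolding ph canon_def fst_conv snd_conv Q.int_pow_1[OF r] by (simp only: Q.l_one[OF r])
    moreover have "pii n c (CL n c [(g, False)]) = pr n c 1"
      using pr_all[OF i, of c] Rho by (simp add: rh_def)
    ultimately show ?thesis by simp
  next
    case (Sigma i t0)
    then have i: "1 \<le> i" "i \<le> n - 1" "1 \<le> t0" "t0 \<le> c" using Sigma_in_D g by auto
    have ph: "phiG c (CL n c [(g, False)]) = ((\<lambda>t\<in>{1..c}. if t0 = t then 1 else 0), 0)"
      unfolding phiG_cls[OF vg] phw_def using Sigma by simp
    have "finprod (QQ n c) (\<lambda>t. ps n c 1 t [^]\<^bsub>QQ n c\<^esub> ((\<lambda>t\<in>{1..c}. if t0 = t then 1 else 0::int) t)) {1..c}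
        = finprod (QQ n c) (\<lambda>t. if t0 = t then ps n c 1 t else \<one>\<^bsub>QQ n c\<^esub>) {1..c}"
      using s Q.one_closed by (intro Q.finprod_cong' funcsetI) auto
    also have "\<dots> = ps n c 1 t0"
      using s i by (intro Q.finprod_singleton funcsetI) auto
    finally have "canon n c (phiG c (CL n c [(g, False)])) = ps n c 1 t0"
      unfolding ph canon_def fst_conv snd_conv int_pow_0 using s i by (simp only: Q.r_one[OF s] atLeastAtMost_iff)
    moreover have "pii n c (CL n c [(g, False)]) = ps n c 1 t0"
      using ps_all[OF i] Sigma by (simp add: sg_def)
    ultimately show ?thesis by simp
  qed
qed

lemma letter: "n \<ge> 2 \<Longrightarrow> g \<in> uw_gens n c \<Longrightarrow>
   pii n c (CL n c [(g, b)]) = canon n c (phiG c (CL n c [(g, b)]))"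
proof (cases b)
  case False
  assume "n \<ge> 2" "g \<in> uw_gens n c"
  then show ?thesis using letter_False False by simp
next
  case True
  assume n: "n \<ge> 2" and g: "g \<in> uw_gens n c"
  interpret h1: group_hom "UW n c" "QQ n c" "pii n c" by (rule group_hom_pii)
  interpret h2: group_hom "UW n c" "AA c" "phiG c" by (rule group_hom_phiG)
  interpret h3: group_hom "AA c" "QQ n c" "canon n c" by (rule group_hom_canon[OF n])
  have c: "CL n c [(g, False)] \<in> carrier (UW n c)" using g by (intro CL_in) simp
  have "pii n c (CL n c [(g, True)]) = inv\<^bsub>QQ n c\<^esub> pii n c (CL n c [(g, False)])"
    unfolding CL_inv[OF g] using c by (rule h1.hom_inv)
  also have "\<dots> = inv\<^bsub>QQ n c\<^esub> canon n c (phiG c (CL n c [(g, False)]))"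
    using letter_False[OF n g] by simp
  also have "\<dots> = canon n c (inv\<^bsub>AA c\<^esub> (phiG c (CL n c [(g, False)])))"
    using c by (intro h3.hom_inv[symmetric] h2.hom_closed)
  also have "\<dots> = canon n c (phiG c (CL n c [(g, True)]))"
    unfolding CL_inv[OF g] using c by (simp only: h2.hom_inv)
  finally show ?thesis using True by simp
qed

lemma pii_canon: "n \<ge> 2 \<Longrightarrow> valid_word (uw_gens n c) w \<Longrightarrow>
   pii n c (CL n c w) = canon n c (phiG c (CL n c w))"
proof (induction w)
  case Nil
  interpret h1: group_hom "UW n c" "QQ n c" "pii n c" by (rule group_hom_pii)
  interpret h2: group_hom "UW n c" "AA c" "phiG c" by (rule group_hom_phiG)
  interpret h3: group_hom "AA c" "QQ n c" "canon n c" by (rule group_hom_canon[OF Nil(1)])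
  show ?case unfolding G_one[symmetric] by (simp only: h1.hom_one h2.hom_one h3.hom_one)
next
  case (Cons x w)
  interpret h1: group_hom "UW n c" "QQ n c" "pii n c" by (rule group_hom_pii)
  interpret h2: group_hom "UW n c" "AA c" "phiG c" by (rule group_hom_phiG)
  interpret h3: group_hom "AA c" "QQ n c" "canon n c" by (rule group_hom_canon[OF Cons(2)])
  obtain g b where x: "x = (g, b)" by (cases x)
  have g: "g \<in> uw_gens n c" and w: "valid_word (uw_gens n c) w" using Cons(3) x by auto
  have c1: "CL n c [x] \<in> carrier (UW n c)" and c2: "CL n c w \<in> carrier (UW n c)"
    using g w x by (auto intro!: CL_in)
  have cons: "CL n c (x # w) = CL n c [x] \<otimes>\<^bsub>UW n c\<^esub> CL n c w"
    by (rule CL_Cons) (use g x w in auto)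
  have "pii n c (CL n c (x # w)) = pii n c (CL n c [x]) \<otimes>\<^bsub>QQ n c\<^esub> pii n c (CL n c w)"
    unfolding cons by (rule h1.hom_mult[OF c1 c2])
  also have "\<dots> = canon n c (phiG c (CL n c [x])) \<otimes>\<^bsub>QQ n c\<^esub> canon n c (phiG c (CL n c w))"
    using letter[OF Cons(2) g, of b] Cons.IH[OF Cons(2) w] x by simp
  also have "\<dots> = canon n c (phiG c (CL n c (x # w)))"
    unfolding cons h2.hom_mult[OF c1 c2] by (rule h3.hom_mult[symmetric]; rule h2.hom_closed; fact)
  finally show ?case .
qed



lemma kernel_sub_derived: "n \<ge> 2 \<Longrightarrow> kernel (UW n c) (AA c) (phiG c) \<subseteq> derived (UW n c) (carrier (UW n c))"
proof
  fix x assume n: "n \<ge> 2" and x: "x \<in> kernel (UW n c) (AA c) (phiG c)"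
  interpret h3: group_hom "AA c" "QQ n c" "canon n c" by (rule group_hom_canon[OF n])
  interpret G: group "UW n c" by (rule group_G)
  have xc: "x \<in> carrier (UW n c)" and x1: "phiG c x = \<one>\<^bsub>AA c\<^esub>" using x by (auto simp: kernel_def)
  obtain w where w: "valid_word (uw_gens n c) w" "x = CL n c w" using xc by (auto simp: G_carrier)
  have "pii n c x = canon n c (phiG c x)" using pii_canon[OF n w(1)] w(2) by simp
  also have "\<dots> = \<one>\<^bsub>QQ n c\<^esub>" unfolding x1 by (rule h3.hom_one)
  finally have "DD n c #>\<^bsub>UW n c\<^esub> x = DD n c" by (simp add: pii_def)
  moreover have "x \<in> DD n c #>\<^bsub>UW n c\<^esub> x"
    by (rule G.rcos_self[OF xc]) (use normal_D in \<open>simp add: normal_def\<close>)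
  ultimately show "x \<in> derived (UW n c) (carrier (UW n c))" by (simp add: DD_def)
qed

theorem proposition5p7:
  fixes n c :: nat
  assumes "n \<ge> 2" and "c \<ge> 1"
  shows "abelianization (UW n c) \<cong>
           DirProd (product_group {1..c} (\<lambda>_. integer_group)) (integer_mod_group 2)"
proof -
  have k: "kernel (UW n c) (AA c) (phiG c) = derived (UW n c) (carrier (UW n c))"
    using kernel_sub_derived[OF assms(1)] derived_sub_kernel by blast
  show ?thesis
    using group_hom.FactGroup_iso[OF group_hom_phiG[of n c] phiG_surj[OF assms(1), of c]]
    unfolding abelianization_def k .
qed

end
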